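(* Let $(C,D)$ and $(C,D')$ be two multifactorizations of $w$ on the same underlying $R$-module $C$, supported in finitely many filtration gradings, with $D=\sum_i d_i$, $D'=\sum_i d_i'$, and suppose $d_i=d_i'$ for all $i<n$ (some $n\ge1$). Then $d_n-d_n'$ is a chain map of matrix factorizations $(C,d_0)\to(C,d_0)\{-k\}$. If moreover this chain map is $0$-homotopic to the zero map, then there is a differential $D''=\sum_i d_i''$ on $C$ such that $(C,D'')$ is a multifactorization of $w$ isomorphic to $(C,D')$ and $d_i''=d_i$ for all $i<n+1$.
   Context: All rings and modules are bigraded by an internal grading and a filtration grading. For a module $M$, $M\{i,j\}$ denotes $M$ with gradings shifted so that an element of bidegree $(a,b)$ in $M$ has bidegree $(a+i,b+j)$ in $M\{i,j\}$, $M\{i\}=M\{i,0\}$; a shift by an odd internal amount negates the differential (Koszul sign rule using the internal grading). Fix a ring $R$ and homogeneous $w\in R$ of bidegree $(2k,0)$, $k$ odd. A matrix factorization of $w$ is an $R$-module with $R$-linear $d$ of bidegree $(k,0)$, $d^2=w$. A multifactorization of $w$ is an $R$-module $C$ with $R$-linear maps $d_i:C\to C$ ($i\ge0$) homogeneous of bidegree $(k,i)$ such that $D=\sum_id_i$ satisfies $D^2=w$; $(C,d_0)$ is its vertical factorization. A chain map $F:(C,D)\to(C',D')$ is $F=\sum_{i\ge0}f_i$, $f_i$ $R$-linear of bidegree $(0,i)$, with $FD=D'F$; an isomorphism of multifactorizations is an invertible chain map. For an integer $m$, an $m$-homotopy between chain maps $F,G$ is $H=\sum_{i\ge-m}h_i$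 with $h_i$ of bidegree $(-k,i)$ and $F-G=HD+D'H$ (for matrix factorizations of the vertical kind, only the $d_0$ differentials enter). *)

theory Defs
  imports Main "HOL.Modules" "HOL-Library.Product_Plus"
begin

text \<open>Bigradings are encoded by families of projections onto homogeneous
components, indexed by bidegrees (internal, filtration) in int x int.\<close>

definition graded_decomp :: "(int \<times> int \<Rightarrow> 'a::ab_group_add \<Rightarrow> 'a) \<Rightarrow> bool" where
  "graded_decomp p \<longleftrightarrow>
     (\<forall>g x y. p g (x + y) = p g x + p g y) \<and>
     (\<forall>g h x. p g (p h x) = (if g = h then p h x else 0)) \<and>
     (\<forall>x. finite {g. p g x \<noteq> 0} \<and> x = (\<Sum>g\<in>{g. p g x \<noteq> 0}. p g x))"

definition homog :: "(int \<times> int \<Rightarrow> 'a \<Rightarrow> 'a) \<Rightarrow> int \<times> int \<Rightarrow> 'a \<Rightarrow> bool" where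
  "homog p g x \<longleftrightarrow> p g x = x"

definition graded_ring :: "(int \<times> int \<Rightarrow> 'r::comm_ring_1 \<Rightarrow> 'r) \<Rightarrow> bool" where
  "graded_ring pR \<longleftrightarrow> graded_decomp pR \<and> homog pR (0, 0) 1 \<and>
     (\<forall>g h a b. homog pR g a \<longrightarrow> homog pR h b \<longrightarrow> homog pR (g + h) (a * b))"

definition graded_module ::
  "(int \<times> int \<Rightarrow> 'r::comm_ring_1 \<Rightarrow> 'r) \<Rightarrow> ('r \<Rightarrow> 'm::ab_group_add \<Rightarrow> 'm) \<Rightarrow> (int \<times> int \<Rightarrow> 'm \<Rightarrow> 'm) \<Rightarrow> bool" where
  "graded_module pR scale p \<longleftrightarrow> module scale \<and> graded_decomp p \<and>
     (\<forall>g h r x. homog pR g r \<longrightarrow> homog p h x \<longrightarrow> homog p (g + h) (scale r x))"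

definition finite_filt_support :: "(int \<times> int \<Rightarrow> 'm::ab_group_add \<Rightarrow> 'm) \<Rightarrow> bool" where
  "finite_filt_support p \<longleftrightarrow> (\<exists>B. finite B \<and> (\<forall>a b x. b \<notin> B \<longrightarrow> p (a, b) x = 0))"

definition lin_hom ::
  "('r::comm_ring_1 \<Rightarrow> 'm::ab_group_add \<Rightarrow> 'm) \<Rightarrow> ('r \<Rightarrow> 'n::ab_group_add \<Rightarrow> 'n) \<Rightarrow>
   (int \<times> int \<Rightarrow> 'm \<Rightarrow> 'm) \<Rightarrow> (int \<times> int \<Rightarrow> 'n \<Rightarrow> 'n) \<Rightarrow> int \<times> int \<Rightarrow> ('m \<Rightarrow> 'n) \<Rightarrow> bool" where
  "lin_hom sm sn p q \<delta> f \<longleftrightarrow>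
     (\<forall>x y. f (x + y) = f x + f y) \<and> (\<forall>r x. f (sm r x) = sn r (f x)) \<and>
     (\<forall>g x. homog p g x \<longrightarrow> homog q (g + \<delta>) (f x))"

definition total :: "('i \<Rightarrow> 'm \<Rightarrow> 'n::comm_monoid_add) \<Rightarrow> 'm \<Rightarrow> 'n" where
  "total d x = (\<Sum>i\<in>{i. d i x \<noteq> 0}. d i x)"

definition multifact ::
  "('r::comm_ring_1 \<Rightarrow> 'm::ab_group_add \<Rightarrow> 'm) \<Rightarrow> (int \<times> int \<Rightarrow> 'm \<Rightarrow> 'm) \<Rightarrow> int \<Rightarrow> 'r \<Rightarrow> (nat \<Rightarrow> 'm \<Rightarrow> 'm) \<Rightarrow> bool" where
  "multifact scale p k w d \<longleftrightarrow>
     (\<forall>i. lin_hom scale scale p p (k, int i) (d i)) \<and>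
     (\<forall>x. finite {i. d i x \<noteq> 0}) \<and>
     (\<forall>x. total d (total d x) = scale w x)"

definition chain_map ::
  "('r::comm_ring_1 \<Rightarrow> 'm::ab_group_add \<Rightarrow> 'm) \<Rightarrow> ('r \<Rightarrow> 'n::ab_group_add \<Rightarrow> 'n) \<Rightarrow>
   (int \<times> int \<Rightarrow> 'm \<Rightarrow> 'm) \<Rightarrow> ('m \<Rightarrow> 'm) \<Rightarrow> (int \<times> int \<Rightarrow> 'n \<Rightarrow> 'n) \<Rightarrow> ('n \<Rightarrow> 'n) \<Rightarrow>
   (nat \<Rightarrow> 'm \<Rightarrow> 'n) \<Rightarrow> bool" where
  "chain_map sm sn p D q D' f \<longleftrightarrow>
     (\<forall>i. lin_hom sm sn p q (0, int i) (f i)) \<and>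
     (\<forall>x. finite {i. f i x \<noteq> 0}) \<and>
     (\<forall>x. total f (D x) = D' (total f x))"

definition mf_iso ::
  "('r::comm_ring_1 \<Rightarrow> 'm::ab_group_add \<Rightarrow> 'm) \<Rightarrow>
   (int \<times> int \<Rightarrow> 'm \<Rightarrow> 'm) \<Rightarrow> ('m \<Rightarrow> 'm) \<Rightarrow> (int \<times> int \<Rightarrow> 'm \<Rightarrow> 'm) \<Rightarrow> ('m \<Rightarrow> 'm) \<Rightarrow> bool" where
  "mf_iso scale p D q D' \<longleftrightarrow>
     (\<exists>f g. chain_map scale scale p D q D' f \<and> chain_map scale scale q D' p D g \<and>
        (\<forall>x. total g (total f x) = x) \<and> (\<forall>y. total f (total g y) = y))"

text \<open>m-homotopy between chain maps F, G: (C,d) -> (C',d') of matrix factorizations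
  (d of bidegree (k,0)): H = sum_{i >= -m} h_i, h_i of bidegree (-k,i), F - G = H d + d' H.\<close>
definition mf_homotopy ::
  "('r::comm_ring_1 \<Rightarrow> 'm::ab_group_add \<Rightarrow> 'm) \<Rightarrow> ('r \<Rightarrow> 'n::ab_group_add \<Rightarrow> 'n) \<Rightarrow>
   (int \<times> int \<Rightarrow> 'm \<Rightarrow> 'm) \<Rightarrow> ('m \<Rightarrow> 'm) \<Rightarrow> (int \<times> int \<Rightarrow> 'n \<Rightarrow> 'n) \<Rightarrow> ('n \<Rightarrow> 'n) \<Rightarrow>
   int \<Rightarrow> int \<Rightarrow> (nat \<Rightarrow> 'm \<Rightarrow> 'n) \<Rightarrow> (nat \<Rightarrow> 'm \<Rightarrow> 'n) \<Rightarrow> (int \<Rightarrow> 'm \<Rightarrow> 'n) \<Rightarrow> bool" where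
  "mf_homotopy sm sn p d q d' k m f g h \<longleftrightarrow>
     (\<forall>i. i < - m \<longrightarrow> h i = (\<lambda>x. 0)) \<and>
     (\<forall>i. lin_hom sm sn p q (- k, i) (h i)) \<and>
     (\<forall>x. finite {i. h i x \<noteq> 0}) \<and>
     (\<forall>x. total f x - total g x = total h (d x) + d' (total h x))"

definition mf_homotopic ::
  "('r::comm_ring_1 \<Rightarrow> 'm::ab_group_add \<Rightarrow> 'm) \<Rightarrow> ('r \<Rightarrow> 'n::ab_group_add \<Rightarrow> 'n) \<Rightarrow>
   (int \<times> int \<Rightarrow> 'm \<Rightarrow> 'm) \<Rightarrow> ('m \<Rightarrow> 'm) \<Rightarrow> (int \<times> int \<Rightarrow> 'n \<Rightarrow> 'n) \<Rightarrow> ('n \<Rightarrow> 'n) \<Rightarrow>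
   int \<Rightarrow> int \<Rightarrow> (nat \<Rightarrow> 'm \<Rightarrow> 'n) \<Rightarrow> (nat \<Rightarrow> 'm \<Rightarrow> 'n) \<Rightarrow> bool" where
  "mf_homotopic sm sn p d q d' k m f g \<longleftrightarrow> (\<exists>h. mf_homotopy sm sn p d q d' k m f g h)"

text \<open>Grading shift M{i,j}: degree (a,b) in M becomes (a+i,b+j).\<close>
definition shift_grading :: "(int \<times> int \<Rightarrow> 'm \<Rightarrow> 'm) \<Rightarrow> int \<times> int \<Rightarrow> int \<times> int \<Rightarrow> 'm \<Rightarrow> 'm" where
  "shift_grading p s = (\<lambda>g. p (g - s))"

text \<open>Koszul sign rule: an odd internal shift negates the differential.\<close>
definition shift_diff :: "int \<Rightarrow> ('m \<Rightarrow> 'm::ab_group_add) \<Rightarrow> 'm \<Rightarrow> 'm" where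
  "shift_diff i d = (if odd i then (\<lambda>x. - d x) else d)"

end

theory Submission
  imports Defs
begin

lemma addf_zero:
  fixes f :: "'a::ab_group_add \<Rightarrow> 'b::ab_group_add"
  assumes "\<forall>x y. f (x + y) = f x + f y" shows "f 0 = 0"
proof -
  have "f 0 = f 0 + f 0" using assms by (metis add_0)
  then show ?thesis by simp
qed

lemma addf_minus:
  fixes f :: "'a::ab_group_add \<Rightarrow> 'b::ab_group_add"
  assumes "\<forall>x y. f (x + y) = f x + f y" shows "f (- x) = - f x"
proof -
  have "f (x + - x) = f x + f (- x)" using assms by blast
  then have "f x + f (- x) = 0" using addf_zero[OF assms] by simp
  then show ?thesis by (metis add.inverse_unique)
qed

lemma addf_diff:
  fixes f :: "'a::ab_group_add \<Rightarrow> 'b::ab_group_add"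
  assumes "\<forall>x y. f (x + y) = f x + f y" shows "f (x - y) = f x - f y"
  using assms addf_minus[OF assms] by (metis diff_conv_add_uminus)

lemma addf_sum:
  fixes f :: "'a::ab_group_add \<Rightarrow> 'b::ab_group_add"
  assumes "\<forall>x y. f (x + y) = f x + f y" shows "f (sum g S) = (\<Sum>i\<in>S. f (g i))"
proof (cases "finite S")
  case True then show ?thesis
    by (induction S rule: finite_induct) (simp_all add: addf_zero[OF assms] assms)
qed (simp add: addf_zero[OF assms])

lemma gd_add: "graded_decomp p \<Longrightarrow> p g (x + y) = p g x + p g y"
  unfolding graded_decomp_def by blast

lemma gd_additive: "graded_decomp p \<Longrightarrow> \<forall>x y. p g (x + y) = p g x + p g y"
  unfolding graded_decomp_def by blast

lemma gd_zero: assumes "graded_decomp p" shows "p g 0 = 0"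
  by (rule addf_zero[OF gd_additive[OF assms]])

lemma gd_minus: assumes "graded_decomp p" shows "p g (- x) = - p g x"
  by (rule addf_minus[OF gd_additive[OF assms]])

lemma homog_proj:
  assumes "graded_decomp p" "homog p h y"
  shows "p g y = (if g = h then y else 0)"
proof -
  have "p g (p h y) = (if g = h then p h y else 0)" using assms(1) unfolding graded_decomp_def by blast
  then show ?thesis using assms(2) unfolding homog_def by simp
qed

lemma homog_0: "graded_decomp p \<Longrightarrow> homog p g 0"
  unfolding homog_def using gd_zero by blast

lemma homog_add: "graded_decomp p \<Longrightarrow> homog p g x \<Longrightarrow> homog p g y \<Longrightarrow> homog p g (x + y)"
  unfolding homog_def using gd_add by metis

lemma homog_minus: "graded_decomp p \<Longrightarrow> homog p g x \<Longrightarrow> homog p g (- x)"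
  unfolding homog_def using gd_minus by metis

lemma homog_diff: "graded_decomp p \<Longrightarrow> homog p g x \<Longrightarrow> homog p g y \<Longrightarrow> homog p g (x - y)"
  by (metis diff_conv_add_uminus homog_add homog_minus)

lemma homog_sum:
  assumes "graded_decomp p" "\<forall>i\<in>S. homog p g (y i)"
  shows "homog p g (sum y S)"
proof (cases "finite S")
  case True then show ?thesis using assms(2)
    by (induction S rule: finite_induct) (simp_all add: homog_0[OF assms(1)] homog_add[OF assms(1)])
qed (simp add: homog_0[OF assms(1)])

lemma homog_self: assumes "graded_decomp p" shows "homog p g (p g x)"
proof -
  have "\<forall>g h x. p g (p h x) = (if g = h then p h x else 0)" using assms unfolding graded_decomp_def by blast
  then show ?thesis unfolding homog_def by metis
qed

lemma proj_sum:
  assumes "graded_decomp p" "\<forall>i\<in>S. homog p (\<delta> i) (y i)"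
  shows "p G (sum y S) = (\<Sum>i\<in>S. if \<delta> i = G then y i else 0)"
proof -
  have "p G (sum y S) = (\<Sum>i\<in>S. p G (y i))" by (rule addf_sum[OF gd_additive[OF assms(1)]])
  also have "\<dots> = (\<Sum>i\<in>S. if \<delta> i = G then y i else 0)"
    by (rule sum.cong[OF refl]) (metis assms(2) homog_proj[OF assms(1)])
  finally show ?thesis .
qed

lemma gd_ext:
  fixes T S :: "'a::ab_group_add \<Rightarrow> 'b::ab_group_add"
  assumes gd: "graded_decomp p" and aT: "\<forall>x y. T (x + y) = T x + T y"
    and aS: "\<forall>x y. S (x + y) = S x + S y"
    and h: "\<And>g x. homog p g x \<Longrightarrow> T x = S x"
  shows "T x = S x"
proof -
  have dec: "x = (\<Sum>g\<in>{g. p g x \<noteq> 0}. p g x)" using gd unfolding graded_decomp_def by blast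
  have "T x = (\<Sum>g\<in>{g. p g x \<noteq> 0}. T (p g x))" by (subst dec) (rule addf_sum[OF aT])
  also have "\<dots> = (\<Sum>g\<in>{g. p g x \<noteq> 0}. S (p g x))" by (rule sum.cong) (auto intro: h homog_self[OF gd])
  also have "\<dots> = S x" by (subst (2) dec) (rule addf_sum[OF aS, symmetric])
  finally show ?thesis .
qed

lemma total_eq:
  assumes "finite S" "{i. d i x \<noteq> 0} \<subseteq> S"
  shows "total d x = (\<Sum>i\<in>S. d i x)"
  unfolding total_def using assms by (intro sum.mono_neutral_left) auto

lemma extract_comp:
  assumes gd: "graded_decomp p" and fin: "finite {i. e i x \<noteq> 0}"
    and hom: "\<forall>i. homog p (\<delta> i) (e i x)" and inj: "inj \<delta>"
  shows "p (\<delta> m) (total e x) = e m x"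
proof -
  let ?S = "insert m {i. e i x \<noteq> 0}"
  have "total e x = (\<Sum>i\<in>?S. e i x)" using fin by (intro total_eq) auto
  then have "p (\<delta> m) (total e x) = (\<Sum>i\<in>?S. if \<delta> i = \<delta> m then e i x else 0)"
    using proj_sum[OF gd, of ?S \<delta> "\<lambda>i. e i x"] hom by simp
  also have "\<dots> = (\<Sum>i\<in>?S. if i = m then e i x else 0)"
    using inj by (intro sum.cong) (auto dest: injD)
  also have "\<dots> = e m x" using fin by simp
  finally show ?thesis .
qed


definition conv :: "(nat \<Rightarrow> 'm \<Rightarrow> 'm::ab_group_add) \<Rightarrow> (nat \<Rightarrow> 'm \<Rightarrow> 'm) \<Rightarrow> nat \<Rightarrow> 'm \<Rightarrow> 'm" where
  "conv f g m x = (\<Sum>i\<le>m. f i (g (m - i) x))"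

lemma lin_hom_add: "lin_hom sm sn p q \<delta> f \<Longrightarrow> \<forall>x y. f (x + y) = f x + f y"
  unfolding lin_hom_def by blast

lemma conv_lin:
  assumes gd: "graded_decomp p" and md: "module s"
    and f: "\<forall>i. lin_hom s s p p (c1, int i) (f i)"
    and g: "\<forall>j. lin_hom s s p p (c2, int j) (g j)"
  shows "lin_hom s s p p (c1 + c2, int m) (conv f g m)"
  unfolding lin_hom_def
proof (intro conjI allI impI)
  fix x y
  have "conv f g m (x + y) = (\<Sum>i\<le>m. f i (g (m - i) x) + f i (g (m - i) y))"
    unfolding conv_def using f g unfolding lin_hom_def by simp
  then show "conv f g m (x + y) = conv f g m x + conv f g m y"
    unfolding conv_def by (simp add: sum.distrib)
next
  fix r x
  have "conv f g m (s r x) = (\<Sum>i\<le>m. s r (f i (g (m - i) x)))"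
    unfolding conv_def using f g unfolding lin_hom_def by simp
  then show "conv f g m (s r x) = s r (conv f g m x)"
    unfolding conv_def by (simp add: module.scale_sum_right[OF md])
next
  fix g0 x assume hx: "homog p g0 x"
  show "homog p (g0 + (c1 + c2, int m)) (conv f g m x)"
    unfolding conv_def
  proof (rule homog_sum[OF gd], intro ballI)
    fix i assume "i \<in> {..m}"
    then have e: "g0 + (c2, int (m - i)) + (c1, int i) = g0 + (c1 + c2, int m)"
      by (simp add: prod_eq_iff of_nat_diff)
    have "homog p (g0 + (c2, int (m - i))) (g (m - i) x)" using g hx unfolding lin_hom_def by blast
    then have "homog p (g0 + (c2, int (m - i)) + (c1, int i)) (f i (g (m - i) x))"
      using f unfolding lin_hom_def by blast
    then show "homog p (g0 + (c1 + c2, int m)) (f i (g (m - i) x))" using e by simp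
  qed
qed

lemma conv_total:
  fixes f g :: "nat \<Rightarrow> 'm \<Rightarrow> 'm::ab_group_add"
  assumes af: "\<forall>i. \<forall>x y. f i (x + y) = f i x + f i y"
    and ff: "\<forall>x. finite {i. f i x \<noteq> 0}" and fg: "\<forall>x. finite {i. g i x \<noteq> 0}"
  shows "finite {m. conv f g m x \<noteq> 0} \<and> total (conv f g) x = total f (total g x)"
proof -
  define T where "T = {j. g j x \<noteq> 0}"
  define S where "S = (\<Union>j\<in>T. {i. f i (g j x) \<noteq> 0})"
  have fT: "finite T" using fg T_def by simp
  have fS: "finite S" unfolding S_def using fT ff by blast
  have f0: "\<And>i. f i 0 = 0" using addf_zero af by blast
  have Z: "f i (g j x) = 0" if "i \<notin> S \<or> j \<notin> T" for i j
  proof (cases "g j x = 0")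
    case True then show ?thesis using f0 by simp
  next
    case False then have "j \<in> T" by (simp add: T_def)
    with that have "i \<notin> S" by blast
    then show ?thesis using \<open>j \<in> T\<close> unfolding S_def by blast
  qed
  obtain K where K: "\<forall>i\<in>S \<union> T. i \<le> K"
    using finite_nat_set_iff_bounded_le[of "S \<union> T"] fS fT by auto
  then have K1: "\<forall>i\<in>S. i \<le> K" and K2: "\<forall>j\<in>T. j \<le> K" by auto
  have supp: "{m. conv f g m x \<noteq> 0} \<subseteq> {..K + K}"
  proof
    fix m assume "m \<in> {m. conv f g m x \<noteq> 0}"
    then have "(\<Sum>i\<le>m. f i (g (m - i) x)) \<noteq> 0" unfolding conv_def by simp
    then obtain i where i: "i \<le> m" "f i (g (m - i) x) \<noteq> 0"
      by (meson atMost_iff sum.neutral)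
    then have "i \<in> S" "m - i \<in> T" using Z by blast+
    then have "i \<le> K" "m - i \<le> K" using K1 K2 by auto
    then show "m \<in> {..K + K}" using i(1) by simp
  qed
  have fsum: "f i (sum h A) = (\<Sum>a\<in>A. f i (h a))" for i h A
  proof -
    have "\<forall>x y. f i (x + y) = f i x + f i y" using af by blast
    then show ?thesis by (rule addf_sum)
  qed
  have "total (conv f g) x = (\<Sum>m\<le>K + K. conv f g m x)"
    using supp by (intro total_eq) auto
  also have "\<dots> = (\<Sum>(i,j)\<in>{(i,j). i + j \<le> K + K}. f i (g j x))"
    unfolding conv_def by (rule sum.triangle_reindex_eq[symmetric])
  also have "\<dots> = (\<Sum>(i,j)\<in>S \<times> T. f i (g j x))"
  proof (rule sum.mono_neutral_right)
    show "finite {(i,j). i + j \<le> K + K}"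
      by (rule finite_subset[of _ "{..K+K} \<times> {..K+K}"]) auto
  next
    show "S \<times> T \<subseteq> {(i,j). i + j \<le> K + K}"
    proof
      fix ij assume "ij \<in> S \<times> T"
      then obtain i j where "ij = (i,j)" "i \<le> K" "j \<le> K" using K1 K2 by blast
      then show "ij \<in> {(i,j). i + j \<le> K + K}" by simp
    qed
  next
    show "\<forall>ij\<in>{(i,j). i + j \<le> K + K} - S \<times> T. (case ij of (i,j) \<Rightarrow> f i (g j x)) = 0"
      using Z by auto
  qed
  also have "\<dots> = (\<Sum>i\<in>S. \<Sum>j\<in>T. f i (g j x))" by (rule sum.cartesian_product[symmetric])
  also have "\<dots> = (\<Sum>i\<in>S. f i (\<Sum>j\<in>T. g j x))"
    by (simp add: fsum)
  also have "\<dots> = total f (\<Sum>j\<in>T. g j x)"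
  proof (rule total_eq[symmetric, OF fS])
    show "{i. f i (\<Sum>j\<in>T. g j x) \<noteq> 0} \<subseteq> S"
    proof
      fix i assume "i \<in> {i. f i (\<Sum>j\<in>T. g j x) \<noteq> 0}"
      then have "(\<Sum>j\<in>T. f i (g j x)) \<noteq> 0" by (simp add: fsum)
      then obtain j where "j \<in> T" "f i (g j x) \<noteq> 0" by (meson sum.neutral)
      then show "i \<in> S" using Z by blast
    qed
  qed
  also have "(\<Sum>j\<in>T. g j x) = total g x" unfolding T_def total_def ..
  finally show ?thesis using supp by (meson finite_atMost finite_subset)
qed

lemma nilpotent:
  fixes \<nu> :: "'m::ab_group_add \<Rightarrow> 'm"
  assumes gd: "graded_decomp p" and fs: "finite_filt_support p"
    and a: "\<forall>x y. \<nu> (x + y) = \<nu> x + \<nu> y"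
    and h: "\<forall>g x. homog p g x \<longrightarrow> homog p (g + (0, int n)) (\<nu> x)"
    and n: "n \<ge> 1"
  shows "\<exists>N\<ge>2. \<forall>x. (\<nu> ^^ N) x = 0"
proof -
  obtain B where fB: "finite B" and B: "\<forall>a b x. b \<notin> B \<longrightarrow> p (a, b) x = 0"
    using fs unfolding finite_filt_support_def by blast
  define M :: int where "M = Max (insert 0 (abs ` B))"
  have M: "\<forall>b\<in>B. \<bar>b\<bar> \<le> M" using fB unfolding M_def by (simp add: Max_ge)
  define N where "N = nat (2 * M) + 2"
  have addN: "\<forall>x y. (\<nu> ^^ j) (x + y) = (\<nu> ^^ j) x + (\<nu> ^^ j) y" for j
    by (induction j) (simp_all add: a)
  have homN: "homog p (g + (0, int (j * n))) ((\<nu> ^^ j) x)" if "homog p g x" for g x j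
  proof (induction j)
    case 0 then show ?case using that by (simp add: zero_prod_def[symmetric])
  next
    case (Suc j)
    then have "homog p (g + (0, int (j * n)) + (0, int n)) (\<nu> ((\<nu> ^^ j) x))" using h by blast
    moreover have "g + (0, int (j * n)) + (0, int n) = g + (0, int (Suc j * n))"
      by (simp add: prod_eq_iff algebra_simps)
    ultimately show ?case by (metis comp_apply funpow.simps(2))
  qed
  have "(\<nu> ^^ N) x = 0" for x
  proof (rule gd_ext[OF gd addN, where S="\<lambda>x. 0", simplified])
    fix g x assume hx: "homog p g x"
    obtain a b where g: "g = (a, b)" by fastforce
    show "(\<nu> ^^ N) x = 0"
    proof (cases "b \<in> B")
      case False
      then have "x = 0" using hx B g unfolding homog_def by metis
      then show ?thesis using addf_zero[OF addN] by blast
    next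
      case True
      then have "b + int (N * n) \<notin> B"
      proof -
        have "int (N * n) \<ge> int N" using n by (metis mult.right_neutral mult_le_mono2 of_nat_le_iff)
        moreover have "int N \<ge> 2 * M + 2" unfolding N_def by simp
        moreover have "b \<ge> - M" using M True by fastforce
        ultimately have "b + int (N * n) > M" by linarith
        then show ?thesis using M by fastforce
      qed
      moreover have "homog p (a, b + int (N * n)) ((\<nu> ^^ N) x)" using homN[OF hx, of N] g by simp
      ultimately show ?thesis using B unfolding homog_def by metis
    qed
  qed
  moreover have "N \<ge> 2" unfolding N_def by simp
  ultimately show ?thesis by blast
qed


lemma lin_hom_zero:
  assumes "graded_decomp q" "module sn"
  shows "lin_hom sm sn p q \<delta> (\<lambda>x. 0)"
  unfolding lin_hom_def using homog_0[OF assms(1)] module.scale_zero_right[OF assms(2)] by simp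

lemma lin_hom_id:
  assumes "graded_decomp p"
  shows "lin_hom s s p p (0, 0) (\<lambda>x. x)"
  unfolding lin_hom_def by (simp add: zero_prod_def[symmetric])

lemma lin_hom_comp:
  assumes "lin_hom s s p p \<delta>1 f" "lin_hom s s p p \<delta>2 g"
  shows "lin_hom s s p p (\<delta>2 + \<delta>1) (\<lambda>x. f (g x))"
  unfolding lin_hom_def
proof (intro conjI allI impI)
  fix x y show "f (g (x + y)) = f (g x) + f (g y)" using assms unfolding lin_hom_def by simp
next
  fix r x show "f (g (s r x)) = s r (f (g x))" using assms unfolding lin_hom_def by simp
next
  fix g0 x assume "homog p g0 x"
  then have "homog p (g0 + \<delta>2) (g x)" using assms(2) unfolding lin_hom_def by blast
  then have "homog p (g0 + \<delta>2 + \<delta>1) (f (g x))" using assms(1) unfolding lin_hom_def by blast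
  then show "homog p (g0 + (\<delta>2 + \<delta>1)) (f (g x))" by (simp add: add.assoc)
qed

lemma funpow_lin:
  assumes "lin_hom s s p p (0, int n) \<nu>" "graded_decomp p"
  shows "lin_hom s s p p (0, int (b * n)) (\<nu> ^^ b)"
proof (induction b)
  case 0 then show ?case using lin_hom_id[OF assms(2)] by (simp add: id_def)
next
  case (Suc b)
  have "lin_hom s s p p ((0, int (b * n)) + (0, int n)) (\<lambda>x. \<nu> ((\<nu> ^^ b) x))"
    by (rule lin_hom_comp[OF assms(1) Suc])
  moreover have "(0::int, int (b * n)) + (0, int n) = (0, int (Suc b * n))" by simp
  ultimately have "lin_hom s s p p (0, int (Suc b * n)) (\<lambda>x. \<nu> ((\<nu> ^^ b) x))" by metis
  moreover have "(\<nu> ^^ Suc b) = (\<lambda>x. \<nu> ((\<nu> ^^ b) x))" by auto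
  ultimately show ?case by metis
qed

lemma comp_unique:
  fixes e e' :: "nat \<Rightarrow> 'm \<Rightarrow> 'm::ab_group_add"
  assumes gd: "graded_decomp p"
    and le: "\<forall>i. lin_hom s s p p (c, int i) (e i)" and le': "\<forall>i. lin_hom s s p p (c, int i) (e' i)"
    and fe: "\<forall>x. finite {i. e i x \<noteq> 0}" and fe': "\<forall>x. finite {i. e' i x \<noteq> 0}"
    and tot: "\<forall>x. total e x = total e' x"
  shows "e m x = e' m x"
proof (rule gd_ext[OF gd, where T="e m" and S="e' m"])
  show "\<forall>x y. e m (x + y) = e m x + e m y" using le unfolding lin_hom_def by blast
  show "\<forall>x y. e' m (x + y) = e' m x + e' m y" using le' unfolding lin_hom_def by blast
  fix g x assume hx: "homog p g x"
  define \<delta> where "\<delta> = (\<lambda>i::nat. g + (c, int i))"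
  have inj: "inj \<delta>" unfolding \<delta>_def by (rule injI) (simp add: prod_eq_iff)
  have h1: "\<forall>i. homog p (\<delta> i) (e i x)" using le hx unfolding lin_hom_def \<delta>_def by blast
  have h2: "\<forall>i. homog p (\<delta> i) (e' i x)" using le' hx unfolding lin_hom_def \<delta>_def by blast
  have "p (\<delta> m) (total e x) = e m x"
    using extract_comp[of p e x \<delta> m] gd fe h1 inj by blast
  moreover have "p (\<delta> m) (total e' x) = e' m x"
    using extract_comp[of p e' x \<delta> m] gd fe' h2 inj by blast
  ultimately show "e m x = e' m x" using tot by metis
qed

lemma split_sum:
  fixes F :: "nat \<Rightarrow> 'a::comm_monoid_add"
  assumes "n \<ge> 1"
  shows "(\<Sum>i\<le>n. F i) = F 0 + F n + (\<Sum>i\<in>{1..<n}. F i)"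
proof -
  have "{..n} = insert 0 (insert n {1..<n})" using assms by auto
  then show ?thesis using assms by (simp add: add.assoc)
qed

lemma total_single:
  assumes "\<forall>i. i \<noteq> n \<longrightarrow> F i = (\<lambda>x. 0)"
  shows "total F y = F n y"
proof -
  have "total F y = (\<Sum>i\<in>{n}. F i y)" by (rule total_eq) (use assms in auto)
  then show ?thesis by simp
qed


lemma ab1: fixes a b c e :: "'a::ab_group_add" assumes "a + b = c + e" shows "a - c = - (b - e)"
  using assms by (simp add: algebra_simps)

theorem lemma2p3:
  fixes pR :: "int \<times> int \<Rightarrow> 'r::comm_ring_1 \<Rightarrow> 'r"
    and scale :: "'r \<Rightarrow> 'm::ab_group_add \<Rightarrow> 'm"
    and p :: "int \<times> int \<Rightarrow> 'm \<Rightarrow> 'm"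
    and k :: int and w :: 'r
    and d d' :: "nat \<Rightarrow> 'm \<Rightarrow> 'm"
    and n :: nat
  assumes "graded_ring pR"
    and "graded_module pR scale p"
    and "odd k"
    and "homog pR (2 * k, 0) w"
    and "finite_filt_support p"
    and "multifact scale p k w d"
    and "multifact scale p k w d'"
    and "n \<ge> 1"
    and "\<forall>i<n. d i = d' i"
  shows "(chain_map scale scale p (d 0) (shift_grading p (- k, 0)) (shift_diff (- k) (d 0))
           (\<lambda>i. if i = n then (\<lambda>x. d n x - d' n x) else (\<lambda>x. 0))) \<and>
         (mf_homotopic scale scale p (d 0) (shift_grading p (- k, 0)) (shift_diff (- k) (d 0)) k 0
           (\<lambda>i. if i = n then (\<lambda>x. d n x - d' n x) else (\<lambda>x. 0)) (\<lambda>i x. 0)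
         \<longrightarrow> (\<exists>d''. multifact scale p k w d'' \<and> mf_iso scale p (total d'') p (total d') \<and>
                    (\<forall>i<n + 1. d'' i = d i)))"
proof -
  have gd: "graded_decomp p" and md: "module scale"
    using assms(2) unfolding graded_module_def by blast+
  have dl: "\<forall>i. lin_hom scale scale p p (k, int i) (d i)" and dfin: "\<forall>x. finite {i. d i x \<noteq> 0}"
    and dsq: "\<forall>x. total d (total d x) = scale w x" using assms(6) unfolding multifact_def by blast+
  have d'l: "\<forall>i. lin_hom scale scale p p (k, int i) (d' i)" and d'fin: "\<forall>x. finite {i. d' i x \<noteq> 0}"
    and d'sq: "\<forall>x. total d' (total d' x) = scale w x" using assms(7) unfolding multifact_def by blast+
  have dadd: "\<forall>i. \<forall>x y. d i (x + y) = d i x + d i y" using dl unfolding lin_hom_def by blast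
  have d'add: "\<forall>i. \<forall>x y. d' i (x + y) = d' i x + d' i y" using d'l unfolding lin_hom_def by blast
  have dadd1: "\<forall>x y. d i (x + y) = d i x + d i y" for i using dadd by blast
  have d'add1: "\<forall>x y. d' i (x + y) = d' i x + d' i y" for i using d'add by blast
  have n0: "n \<noteq> 0" using assms(8) by simp
  have d0eq: "d' 0 = d 0" using assms(9) n0 by simp
  have dscale: "d i (scale r x) = scale r (d i x)" for i r x using dl unfolding lin_hom_def by blast
  have d'scale: "d' i (scale r x) = scale r (d' i x)" for i r x using d'l unfolding lin_hom_def by blast

  have cd: "finite {m. conv d d m x \<noteq> 0} \<and> total (conv d d) x = total d (total d x)" for x
    by (rule conv_total[OF dadd dfin dfin])
  have cd': "finite {m. conv d' d' m x \<noteq> 0} \<and> total (conv d' d') x = total d' (total d' x)" for x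
    by (rule conv_total[OF d'add d'fin d'fin])
  have conveq: "conv d d n x = conv d' d' n x" for x
  proof (rule comp_unique[OF gd, where e="conv d d" and e'="conv d' d'" and s=scale and c="k+k"])
    show "\<forall>i. lin_hom scale scale p p (k + k, int i) (conv d d i)" using conv_lin[OF gd md dl dl] by blast
    show "\<forall>i. lin_hom scale scale p p (k + k, int i) (conv d' d' i)" using conv_lin[OF gd md d'l d'l] by blast
    show "\<forall>x. finite {i. conv d d i x \<noteq> 0}" using cd by blast
    show "\<forall>x. finite {i. conv d' d' i x \<noteq> 0}" using cd' by blast
    show "\<forall>x. total (conv d d) x = total (conv d' d') x" using cd cd' dsq d'sq by simp
  qed
  have key1: "d 0 (d n x) + d n (d 0 x) = d 0 (d' n x) + d' n (d 0 x)" for x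
  proof -
    have e1: "conv d d n x = d 0 (d n x) + d n (d 0 x) + (\<Sum>i\<in>{1..<n}. d i (d (n - i) x))"
      unfolding conv_def by (simp add: split_sum[OF assms(8)])
    have e2: "conv d' d' n x = d' 0 (d' n x) + d' n (d' 0 x) + (\<Sum>i\<in>{1..<n}. d' i (d' (n - i) x))"
      unfolding conv_def by (simp add: split_sum[OF assms(8)])
    have e3: "(\<Sum>i\<in>{1..<n}. d i (d (n - i) x)) = (\<Sum>i\<in>{1..<n}. d' i (d' (n - i) x))"
      using assms(9) by (intro sum.cong) auto
    show ?thesis using e1 e2 e3 conveq[of x] d0eq by simp
  qed

  define F where "F = (\<lambda>i. if i = n then (\<lambda>x. d n x - d' n x) else (\<lambda>x. 0::'m))"
  define q where "q = shift_grading p (- k, 0)"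
  have sd: "shift_diff (- k) (d 0) = (\<lambda>x. - d 0 x)" using assms(3) unfolding shift_diff_def by simp
  have Ftot: "total F y = d n y - d' n y" for y
    using total_single[of n F y] unfolding F_def by simp
  have Ffin: "finite {i. F i x \<noteq> 0}" for x
    by (rule finite_subset[of _ "{n}"]) (auto simp: F_def)
  have qhom: "homog q g y \<longleftrightarrow> homog p (g + (k, 0)) y" for g y
  proof -
    have eq: "g - (- k, 0) = g + (k, 0)" by (simp add: prod_eq_iff)
    show ?thesis unfolding q_def shift_grading_def homog_def eq ..
  qed
  have Flin: "lin_hom scale scale p q (0, int i) (F i)" for i
  proof (cases "i = n")
    case True
    show ?thesis unfolding lin_hom_def F_def using True
    proof (intro conjI allI impI)
      fix x y show "(if i = n then \<lambda>x. d n x - d' n x else (\<lambda>x. 0)) (x + y) =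
          (if i = n then \<lambda>x. d n x - d' n x else (\<lambda>x. 0)) x + (if i = n then \<lambda>x. d n x - d' n x else (\<lambda>x. 0)) y"
        using True dadd d'add by (simp add: algebra_simps)
    next
      fix r x show "(if i = n then \<lambda>x. d n x - d' n x else (\<lambda>x. 0)) (scale r x) =
          scale r ((if i = n then \<lambda>x. d n x - d' n x else (\<lambda>x. 0)) x)"
        using True dscale d'scale by (simp add: module.scale_right_diff_distrib[OF md])
    next
      fix g x assume hx: "homog p g x"
      have "homog p (g + (k, int n)) (d n x)" "homog p (g + (k, int n)) (d' n x)"
        using dl d'l hx unfolding lin_hom_def by blast+
      then have "homog p (g + (k, int n)) (d n x - d' n x)" by (rule homog_diff[OF gd])
      moreover have eq: "g + (0, int n) + (k, 0) = g + (k, int n)" by (simp add: prod_eq_iff)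
      ultimately have "homog q (g + (0, int n)) (d n x - d' n x)" by (simp only: qhom eq)
      then show "homog q (g + (0, int i)) ((if i = n then \<lambda>x. d n x - d' n x else (\<lambda>x. 0)) x)"
        using True by simp
    qed
  next
    case False
    then have "F i = (\<lambda>x. 0)" unfolding F_def by simp
    moreover have "lin_hom scale scale p q (0, int i) (\<lambda>x. 0)"
      unfolding lin_hom_def using qhom homog_0[OF gd] module.scale_zero_right[OF md] by simp
    ultimately show ?thesis by simp
  qed
  have partA: "chain_map scale scale p (d 0) q (shift_diff (- k) (d 0)) F"
    unfolding chain_map_def
  proof (intro conjI allI)
    fix i show "lin_hom scale scale p q (0, int i) (F i)" by (rule Flin)
  next
    fix x show "finite {i. F i x \<noteq> 0}" by (rule Ffin)
  next
    fix x
    have "d n (d 0 x) - d' n (d 0 x) = - (d 0 (d n x) - d 0 (d' n x))"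
      by (rule ab1) (use key1[of x] in \<open>simp add: algebra_simps\<close>)
    then show "total F (d 0 x) = shift_diff (- k) (d 0) (total F x)"
      by (simp add: Ftot sd addf_diff[OF dadd1])
  qed
  have partB: "mf_homotopic scale scale p (d 0) q (shift_diff (- k) (d 0)) k 0 F (\<lambda>i x. 0)
         \<longrightarrow> (\<exists>d''. multifact scale p k w d'' \<and> mf_iso scale p (total d'') p (total d') \<and>
                    (\<forall>i<n + 1. d'' i = d i))"
  proof
    assume "mf_homotopic scale scale p (d 0) q (shift_diff (- k) (d 0)) k 0 F (\<lambda>i x. 0)"
    then obtain h where hh: "mf_homotopy scale scale p (d 0) q (shift_diff (- k) (d 0)) k 0 F (\<lambda>i x. 0) h"
      unfolding mf_homotopic_def by blast
    have hl: "\<forall>i. lin_hom scale scale p q (- k, i) (h i)" and hfin: "\<forall>x. finite {i. h i x \<noteq> 0}"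
      and heq: "\<forall>x. total F x - total (\<lambda>(i::nat) x. 0) x = total h (d 0 x) + shift_diff (- k) (d 0) (total h x)"
      using hh[unfolded mf_homotopy_def, THEN conjunct2, THEN conjunct1]
        hh[unfolded mf_homotopy_def, THEN conjunct2, THEN conjunct2, THEN conjunct1]
        hh[unfolded mf_homotopy_def, THEN conjunct2, THEN conjunct2, THEN conjunct2] by auto
    have tz: "total (\<lambda>i x. 0::'m) x = 0" for x by (simp add: total_def)
    have heq': "d n x - d' n x = total h (d 0 x) - d 0 (total h x)" for x
      using heq[rule_format, of x] by (simp add: tz Ftot sd)
    have hhom: "homog p (g + (0, i)) (h i x)" if "homog p g x" for g x i
    proof -
      have "homog q (g + (- k, i)) (h i x)" using hl that unfolding lin_hom_def by blast
      moreover have eq: "g + (- k, i) + (k, 0) = g + (0, i)" by (simp add: prod_eq_iff)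
      ultimately show ?thesis by (simp only: qhom eq)
    qed
    define \<eta> where "\<eta> = h (int n)"
    have \<eta>add: "\<forall>x y. \<eta> (x + y) = \<eta> x + \<eta> y" using hl unfolding lin_hom_def \<eta>_def by blast
    have \<eta>scale: "\<eta> (scale r x) = scale r (\<eta> x)" for r x using hl unfolding lin_hom_def \<eta>_def by blast
    have \<eta>l: "lin_hom scale scale p p (0, int n) \<eta>"
      unfolding lin_hom_def using \<eta>add \<eta>scale hhom \<eta>_def by blast
    have key2: "d n x - d' n x = \<eta> (d 0 x) - d 0 (\<eta> x)" for x
    proof (rule gd_ext[OF gd, where T="\<lambda>x. d n x - d' n x" and S="\<lambda>x. \<eta> (d 0 x) - d 0 (\<eta> x)"])
      show "\<forall>x y. d n (x + y) - d' n (x + y) = d n x - d' n x + (d n y - d' n y)"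
        using dadd d'add by (simp add: algebra_simps)
      show "\<forall>x y. \<eta> (d 0 (x + y)) - d 0 (\<eta> (x + y)) = \<eta> (d 0 x) - d 0 (\<eta> x) + (\<eta> (d 0 y) - d 0 (\<eta> y))"
        using dadd \<eta>add by (simp add: algebra_simps)
      fix g x assume hx: "homog p g x"
      define \<delta> where "\<delta> = (\<lambda>i::int. g + (k, i))"
      have inj: "inj \<delta>" unfolding \<delta>_def by (rule injI) (simp add: prod_eq_iff)
      define G where "G = \<delta> (int n)"
      have "homog p (g + (k, int n)) (d n x)" "homog p (g + (k, int n)) (d' n x)"
        using dl d'l hx unfolding lin_hom_def by blast+
      then have "homog p G (d n x - d' n x)" unfolding G_def \<delta>_def by (rule homog_diff[OF gd])
      then have a: "p G (d n x - d' n x) = d n x - d' n x" unfolding homog_def .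
      have "homog p (g + (k, int 0)) (d 0 x)" using dl hx unfolding lin_hom_def by blast
      then have hd0: "homog p (g + (k, 0)) (d 0 x)" by simp
      have h1: "\<forall>i. homog p (\<delta> i) (h i (d 0 x))"
      proof
        fix i
        have "homog p (g + (k, 0) + (0, i)) (h i (d 0 x))" by (rule hhom[OF hd0])
        moreover have "g + (k, 0) + (0, i) = \<delta> i" unfolding \<delta>_def by (simp add: prod_eq_iff)
        ultimately show "homog p (\<delta> i) (h i (d 0 x))" by simp
      qed
      have b: "p G (total h (d 0 x)) = \<eta> (d 0 x)"
        unfolding G_def \<eta>_def using extract_comp[of p h "d 0 x" \<delta> "int n"] gd hfin h1 inj by blast
      have c: "d 0 (total h x) = total (\<lambda>i y. d 0 (h i y)) x"
      proof -
        have "d 0 (total h x) = (\<Sum>i\<in>{i. h i x \<noteq> 0}. d 0 (h i x))"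
          unfolding total_def by (rule addf_sum[OF dadd1])
        also have "\<dots> = total (\<lambda>i y. d 0 (h i y)) x"
          by (rule total_eq[symmetric]) (use hfin addf_zero[OF dadd1[of 0]] in auto)
        finally show ?thesis .
      qed
      have fin2: "finite {i. d 0 (h i x) \<noteq> 0}"
        by (rule finite_subset[OF _ hfin[rule_format, of x]]) (use addf_zero[OF dadd1[of 0]] in auto)
      have h2: "\<forall>i. homog p (\<delta> i) (d 0 (h i x))"
      proof
        fix i
        have "homog p (g + (0, i)) (h i x)" by (rule hhom[OF hx])
        then have "homog p (g + (0, i) + (k, int 0)) (d 0 (h i x))" using dl unfolding lin_hom_def by blast
        moreover have "g + (0, i) + (k, int 0) = \<delta> i" unfolding \<delta>_def by (simp add: prod_eq_iff)
        ultimately show "homog p (\<delta> i) (d 0 (h i x))" by simp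
      qed
      have e: "p G (d 0 (total h x)) = d 0 (\<eta> x)"
        unfolding c G_def \<eta>_def using extract_comp[of p "\<lambda>i y. d 0 (h i y)" x \<delta> "int n"] gd fin2 h2 inj by blast
      have "d n x - d' n x = p G (total h (d 0 x) - d 0 (total h x))" using a heq' by simp
      also have "\<dots> = p G (total h (d 0 x)) - p G (d 0 (total h x))" by (rule addf_diff[OF gd_additive[OF gd]])
      finally show "d n x - d' n x = \<eta> (d 0 x) - d 0 (\<eta> x)" using b e by simp
    qed
    define \<nu> where "\<nu> = (\<lambda>x. - \<eta> x)"
    have \<nu>add: "\<forall>x y. \<nu> (x + y) = \<nu> x + \<nu> y" using \<eta>add unfolding \<nu>_def by (simp add: algebra_simps)
    have \<nu>l: "lin_hom scale scale p p (0, int n) \<nu>"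
      using \<eta>l unfolding lin_hom_def \<nu>_def
      by (auto simp: algebra_simps module.scale_minus_right[OF md] homog_minus[OF gd])
    have \<nu>hom: "\<forall>g x. homog p g x \<longrightarrow> homog p (g + (0, int n)) (\<nu> x)" using \<nu>l unfolding lin_hom_def by blast
    obtain N where N2: "N \<ge> 2" and \<nu>N: "\<forall>x. (\<nu> ^^ N) x = 0"
      using nilpotent[OF gd assms(5) \<nu>add \<nu>hom assms(8)] by blast
    have \<nu>pow: "lin_hom scale scale p p (0, int (b * n)) (\<nu> ^^ b)" for b by (rule funpow_lin[OF \<nu>l gd])
    have \<nu>powadd: "\<forall>x y. (\<nu> ^^ b) (x + y) = (\<nu> ^^ b) x + (\<nu> ^^ b) y" for b
      using \<nu>pow unfolding lin_hom_def by blast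
    have zl: "lin_hom scale scale p p \<delta> (\<lambda>x. 0)" for \<delta> by (rule lin_hom_zero[OF gd md])
    define \<phi> where "\<phi> = (\<lambda>i. if i = 0 then (\<lambda>x. x) else if i = n then \<eta> else (\<lambda>x. 0::'m))"
    define \<psi> where "\<psi> = (\<lambda>i. if n dvd i \<and> i div n < N then (\<nu> ^^ (i div n)) else (\<lambda>x. 0::'m))"
    have \<phi>l: "\<forall>i. lin_hom scale scale p p (0, int i) (\<phi> i)"
    proof
      fix i show "lin_hom scale scale p p (0, int i) (\<phi> i)"
        using lin_hom_id[OF gd, of scale] \<eta>l zl n0 unfolding \<phi>_def by auto
    qed
    have \<psi>l: "\<forall>i. lin_hom scale scale p p (0, int i) (\<psi> i)"
    proof
      fix i show "lin_hom scale scale p p (0, int i) (\<psi> i)"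
      proof (cases "n dvd i \<and> i div n < N")
        case True
        then have "i div n * n = i" by simp
        then show ?thesis using True \<nu>pow[of "i div n"] unfolding \<psi>_def by simp
      next
        case False then have "\<psi> i = (\<lambda>x. 0)" unfolding \<psi>_def by auto
        then show ?thesis using zl by simp
      qed
    qed
    have \<phi>add: "\<forall>i. \<forall>x y. \<phi> i (x + y) = \<phi> i x + \<phi> i y" using \<phi>l unfolding lin_hom_def by blast
    have \<psi>add: "\<forall>i. \<forall>x y. \<psi> i (x + y) = \<psi> i x + \<psi> i y" using \<psi>l unfolding lin_hom_def by blast
    have \<phi>supp: "{i. \<phi> i x \<noteq> 0} \<subseteq> {0, n}" for x unfolding \<phi>_def by auto
    have \<phi>fin: "\<forall>x. finite {i. \<phi> i x \<noteq> 0}"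
      using \<phi>supp by (meson finite.emptyI finite_insert finite_subset)
    have \<psi>supp: "{i. \<psi> i x \<noteq> 0} \<subseteq> (\<lambda>b. b * n) ` {..<N}" for x
    proof
      fix i assume "i \<in> {i. \<psi> i x \<noteq> 0}"
      then have "n dvd i \<and> i div n < N" unfolding \<psi>_def by (auto split: if_splits)
      then have "i = (i div n) * n" "i div n \<in> {..<N}" by auto
      then show "i \<in> (\<lambda>b. b * n) ` {..<N}" by (rule image_eqI)
    qed
    have \<psi>fin: "\<forall>x. finite {i. \<psi> i x \<noteq> 0}"
      using \<psi>supp by (meson finite_imageI finite_lessThan finite_subset)
    have \<Phi>: "total \<phi> y = y + \<eta> y" for y
    proof -
      have "total \<phi> y = (\<Sum>i\<in>{0, n}. \<phi> i y)" by (rule total_eq[OF _ \<phi>supp]) simp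
      then show ?thesis using n0 by (simp add: \<phi>_def)
    qed
    have \<Psi>: "total \<psi> y = (\<Sum>b<N. (\<nu> ^^ b) y)" for y
    proof -
      have "total \<psi> y = (\<Sum>i\<in>(\<lambda>b. b * n) ` {..<N}. \<psi> i y)" by (rule total_eq[OF _ \<psi>supp]) simp
      also have "\<dots> = (\<Sum>b<N. \<psi> (b * n) y)"
        by (rule sum.reindex_cong[where l="\<lambda>b. b * n"]) (use n0 in \<open>auto simp: inj_on_def\<close>)
      also have "\<dots> = (\<Sum>b<N. (\<nu> ^^ b) y)" using n0 by (intro sum.cong) (auto simp: \<psi>_def)
      finally show ?thesis .
    qed
    have \<eta>\<nu>: "\<eta> z = - \<nu> z" for z unfolding \<nu>_def by simp
    have \<Phi>\<Psi>: "total \<phi> (total \<psi> y) = y" for y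
    proof -
      have "total \<phi> (total \<psi> y) = (\<Sum>b<N. (\<nu> ^^ b) y) + \<eta> (\<Sum>b<N. (\<nu> ^^ b) y)" by (simp add: \<Phi> \<Psi>)
      also have "\<eta> (\<Sum>b<N. (\<nu> ^^ b) y) = (\<Sum>b<N. \<eta> ((\<nu> ^^ b) y))"
        by (rule addf_sum[OF \<eta>add])
      also have "\<dots> = (\<Sum>b<N. - (\<nu> ^^ Suc b) y)"
        by (simp add: \<eta>\<nu>)
      also have "(\<Sum>b<N. (\<nu> ^^ b) y) + (\<Sum>b<N. - (\<nu> ^^ Suc b) y) = (\<Sum>b<N. (\<nu> ^^ b) y - (\<nu> ^^ Suc b) y)"
        by (simp add: sum.distrib[symmetric])
      also have "\<dots> = (\<nu> ^^ 0) y - (\<nu> ^^ N) y" by (rule sum_lessThan_telescope'[where f="\<lambda>b. (\<nu> ^^ b) y"])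
      finally show ?thesis using \<nu>N by simp
    qed
    have \<Psi>\<Phi>: "total \<psi> (total \<phi> y) = y" for y
    proof -
      have "total \<psi> (total \<phi> y) = (\<Sum>b<N. (\<nu> ^^ b) (y + \<eta> y))" by (simp add: \<Phi> \<Psi>)
      also have "\<dots> = (\<Sum>b<N. (\<nu> ^^ b) y - (\<nu> ^^ Suc b) y)"
      proof (rule sum.cong[OF refl])
        fix b
        have "(\<nu> ^^ b) (y + \<eta> y) = (\<nu> ^^ b) y + (\<nu> ^^ b) (- \<nu> y)" unfolding \<eta>\<nu> by (rule \<nu>powadd[rule_format])
        also have "(\<nu> ^^ b) (- \<nu> y) = - (\<nu> ^^ b) (\<nu> y)" by (rule addf_minus[OF \<nu>powadd])
        also have "(\<nu> ^^ b) (\<nu> y) = (\<nu> ^^ Suc b) y" by (simp add: funpow_Suc_right del: funpow.simps)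
        finally show "(\<nu> ^^ b) (y + \<eta> y) = (\<nu> ^^ b) y - (\<nu> ^^ Suc b) y" by simp
      qed
      also have "\<dots> = (\<nu> ^^ 0) y - (\<nu> ^^ N) y" by (rule sum_lessThan_telescope'[where f="\<lambda>b. (\<nu> ^^ b) y"])
      finally show ?thesis using \<nu>N by simp
    qed
    have \<Phi>scale: "total \<phi> (scale w z) = scale w (total \<phi> z)" for z
      by (simp add: \<Phi> \<eta>scale module.scale_right_distrib[OF md])
    define e where "e = conv d' \<psi>"
    define d'' where "d'' = conv \<phi> e"
    have el: "\<forall>m. lin_hom scale scale p p (k, int m) (e m)"
      using conv_lin[OF gd md d'l \<psi>l] unfolding e_def by simp
    have d''l: "\<forall>m. lin_hom scale scale p p (k, int m) (d'' m)"
      using conv_lin[OF gd md \<phi>l el] unfolding d''_def by simp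
    have ec: "finite {m. e m x \<noteq> 0} \<and> total e x = total d' (total \<psi> x)" for x
      unfolding e_def by (rule conv_total[OF d'add d'fin \<psi>fin])
    have dc: "finite {m. d'' m x \<noteq> 0} \<and> total d'' x = total \<phi> (total e x)" for x
      unfolding d''_def by (rule conv_total[OF \<phi>add \<phi>fin]) (use ec in blast)
    have Dtot: "total d'' x = total \<phi> (total d' (total \<psi> x))" for x using dc ec by simp
    have mf: "multifact scale p k w d''"
      unfolding multifact_def
    proof (intro conjI allI)
      fix i show "lin_hom scale scale p p (k, int i) (d'' i)" using d''l by blast
    next
      fix x show "finite {i. d'' i x \<noteq> 0}" using dc by blast
    next
      fix x show "total d'' (total d'' x) = scale w x"
        by (simp add: Dtot \<Psi>\<Phi> d'sq \<Phi>scale \<Phi>\<Psi>)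
    qed
    have iso: "mf_iso scale p (total d'') p (total d')"
      unfolding mf_iso_def
    proof (intro exI conjI)
      show "chain_map scale scale p (total d'') p (total d') \<psi>"
        unfolding chain_map_def using \<psi>l \<psi>fin by (simp add: Dtot \<Psi>\<Phi>)
      show "chain_map scale scale p (total d') p (total d'') \<phi>"
        unfolding chain_map_def using \<phi>l \<phi>fin by (simp add: Dtot \<Psi>\<Phi>)
      show "\<forall>x. total \<phi> (total \<psi> x) = x" using \<Phi>\<Psi> by blast
      show "\<forall>y. total \<psi> (total \<phi> y) = y" using \<Psi>\<Phi> by blast
    qed
    have d'0: "d' i 0 = 0" for i by (rule addf_zero[OF d'add1])
    have \<psi>0: "\<psi> 0 = (\<lambda>x. x)" using N2 unfolding \<psi>_def by (simp add: id_def)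
    have \<psi>n: "\<psi> n = \<nu>" using N2 n0 unfolding \<psi>_def by simp
    have \<psi>mid: "\<psi> j = (\<lambda>x. 0)" if "0 < j" "j < n" for j
      using that unfolding \<psi>_def by (auto dest: dvd_imp_le)
    have elow: "e j x = d' j x" if "j < n" for j x
    proof -
      have "e j x = (\<Sum>i\<le>j. if i = j then d' j x else 0)"
        unfolding e_def conv_def
      proof (rule sum.cong[OF refl])
        fix i assume "i \<in> {..j}"
        then show "d' i (\<psi> (j - i) x) = (if i = j then d' j x else 0)"
          using \<psi>0 \<psi>mid[of "j - i"] that d'0 by auto
      qed
      then show ?thesis by simp
    qed
    have en: "e n x = d' 0 (\<nu> x) + d' n x" for x
    proof -
      have "e n x = d' 0 (\<psi> n x) + d' n (\<psi> 0 x) + (\<Sum>i\<in>{1..<n}. d' i (\<psi> (n - i) x))"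
        unfolding e_def conv_def by (simp add: split_sum[OF assms(8)])
      moreover have "(\<Sum>i\<in>{1..<n}. d' i (\<psi> (n - i) x)) = 0"
        by (rule sum.neutral) (use \<psi>mid d'0 in auto)
      ultimately show ?thesis using \<psi>0 \<psi>n by simp
    qed
    have \<phi>mid: "\<phi> a = (\<lambda>x. 0)" if "0 < a" "a < n" for a using that unfolding \<phi>_def by auto
    have low: "d'' m = d m" if "m < n + 1" for m
    proof
      fix x
      show "d'' m x = d m x"
      proof (cases "m < n")
        case True
        have "d'' m x = (\<Sum>a\<le>m. if a = 0 then e m x else 0)"
          unfolding d''_def conv_def
        proof (rule sum.cong[OF refl])
          fix a assume "a \<in> {..m}"
          then show "\<phi> a (e (m - a) x) = (if a = 0 then e m x else 0)"
            using \<phi>mid[of a] True by (auto simp: \<phi>_def)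
        qed
        then show ?thesis using elow[OF True] True assms(9) by simp
      next
        case False
        then have mn: "m = n" using that by simp
        have "d'' n x = \<phi> 0 (e n x) + \<phi> n (e 0 x) + (\<Sum>a\<in>{1..<n}. \<phi> a (e (n - a) x))"
          unfolding d''_def conv_def by (simp add: split_sum[OF assms(8)])
        moreover have "(\<Sum>a\<in>{1..<n}. \<phi> a (e (n - a) x)) = 0"
          by (rule sum.neutral) (use \<phi>mid in auto)
        moreover have "\<phi> 0 = (\<lambda>x. x)" "\<phi> n = \<eta>" using n0 unfolding \<phi>_def by auto
        moreover have "e 0 x = d' 0 x" using elow n0 by simp
        moreover have "d' 0 (\<nu> x) = - d 0 (\<eta> x)" unfolding \<nu>_def d0eq by (rule addf_minus[OF dadd1])
        ultimately have "d'' n x = - d 0 (\<eta> x) + d' n x + \<eta> (d 0 x)" using en d0eq by simp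
        then have "d'' n x + d 0 (\<eta> x) = d n x + d 0 (\<eta> x)" using key2[of x] by (simp add: algebra_simps)
        then show ?thesis using mn by simp
      qed
    qed
    show "\<exists>d''. multifact scale p k w d'' \<and> mf_iso scale p (total d'') p (total d') \<and> (\<forall>i<n + 1. d'' i = d i)"
      using mf iso low by blast
  qed
  show ?thesis using partA partB unfolding F_def q_def by simp
qed

end
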